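(* Assume (A3) below. For any $\omega$ in the interior of the simplex $\Delta^{L-1}$, the diagonal matrix $W=\mathrm{diag}(\omega_1/\gamma_1^2,\dots,\omega_L/\gamma_L^2)$ is positive definite and satisfies $\lambda(W)=\omega$. For any $\omega\in\Delta^{L-1}$ (including the boundary), there exists a positive definite $W$ with $\lambda(W)=\omega$.
   Context: $D_i\in\{0,1\}$ is a treatment and $\mathbf Z_i=(Z_{1i},\dots,Z_{Li})'\in\{0,1\}^L$, $L\ge2$, are binary instruments. $p_\ell=P(Z_{\ell i}=1)$, $\pi_\ell=\mathbb E[D_i\mid Z_{\ell i}=1]-\mathbb E[D_i\mid Z_{\ell i}=0]$, $\gamma_\ell=\mathrm{Cov}(D_i,Z_{\ell i})=\pi_\ell p_\ell(1-p_\ell)$, $\boldsymbol\gamma=(\gamma_1,\dots,\gamma_L)'$, $\Sigma_Z=\mathrm{Var}(\mathbf Z_i)$. For a positive definite $W$, $\lambda(W)=(\lambda_1(W),\dots,\lambda_L(W))$ with $\lambda_\ell(W)=\gamma_\ell[W\boldsymbol\gamma]_\ell/(\boldsymbol\gamma'W\boldsymbol\gamma)$. $\Delta^{L-1}=\{\omega\in\mathbb R^L:\omega_\ell\ge0,\ \sum_\ell\omega_\ell=1\}$. Assumption (A3): $p_\ell>0$ and $\pi_\ell>0$ for all $\ell$, and $\Sigma_Z$ is positive definite. *)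

theory Defs
  imports "HOL-Probability.Probability"
begin

text \<open>Instruments are indexed by a finite type 'n (L = CARD('n)); vectors are real^'n,
  matrices real^'n^'n. All population moments are taken w.r.t. a probability space M.\<close>

definition covar :: "'a measure \<Rightarrow> ('a \<Rightarrow> real) \<Rightarrow> ('a \<Rightarrow> real) \<Rightarrow> real" where
  "covar M X Y = (\<integral>x. X x * Y x \<partial>M) - (\<integral>x. X x \<partial>M) * (\<integral>x. Y x \<partial>M)"

definition pZ :: "'a measure \<Rightarrow> ('a \<Rightarrow> real^'n) \<Rightarrow> 'n \<Rightarrow> real" where
  "pZ M Z l = measure M {x \<in> space M. Z x $ l = 1}"

definition condE :: "'a measure \<Rightarrow> ('a \<Rightarrow> real) \<Rightarrow> ('a \<Rightarrow> real^'n) \<Rightarrow> 'n \<Rightarrow> real \<Rightarrow> real" where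
  "condE M D Z l v =
     (\<integral>x. D x * indicator {y \<in> space M. Z y $ l = v} x \<partial>M) / measure M {y \<in> space M. Z y $ l = v}"

definition piZ :: "'a measure \<Rightarrow> ('a \<Rightarrow> real) \<Rightarrow> ('a \<Rightarrow> real^'n) \<Rightarrow> 'n \<Rightarrow> real" where
  "piZ M D Z l = condE M D Z l 1 - condE M D Z l 0"

definition gammaZ :: "'a measure \<Rightarrow> ('a \<Rightarrow> real) \<Rightarrow> ('a \<Rightarrow> real^'n) \<Rightarrow> real^'n" where
  "gammaZ M D Z = (\<chi> l. covar M D (\<lambda>x. Z x $ l))"

definition SigmaZ :: "'a measure \<Rightarrow> ('a \<Rightarrow> real^'n) \<Rightarrow> real^'n^'n" where
  "SigmaZ M Z = (\<chi> j k. covar M (\<lambda>x. Z x $ j) (\<lambda>x. Z x $ k))"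

definition pos_def :: "real^'n^'n \<Rightarrow> bool" where
  "pos_def W \<longleftrightarrow> transpose W = W \<and> (\<forall>x. x \<noteq> 0 \<longrightarrow> x \<bullet> (W *v x) > 0)"

definition lam :: "real^'n^'n \<Rightarrow> real^'n \<Rightarrow> real^'n" where
  "lam W g = (\<chi> l. g $ l * (W *v g) $ l / (g \<bullet> (W *v g)))"

definition std_simplex :: "(real^'n) set" where
  "std_simplex = {w. (\<forall>l. w $ l \<ge> 0) \<and> (\<Sum>l\<in>UNIV. w $ l) = 1}"

definition open_simplex :: "(real^'n) set" where
  "open_simplex = {w. (\<forall>l. w $ l > 0) \<and> (\<Sum>l\<in>UNIV. w $ l) = 1}"

definition diagW :: "real^'n \<Rightarrow> real^'n \<Rightarrow> real^'n^'n" where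
  "diagW w g = (\<chi> i j. if i = j then w $ i / (g $ i)\<^sup>2 else 0)"

end

theory Submission
  imports Defs
begin

lemma ifm: "(if i = j then a else (0::real)) * b = (if i = j then a * b else 0)" by simp

lemma ifm2: "b * (if i = j then a else (0::real)) = (if i = j then b * a else 0)" by simp

lemma pd_diag: "pos_def (S::real^'n^'n) \<Longrightarrow> S $ l $ l > 0"
  unfolding pos_def_def
  apply (drule conjunct2, drule spec[of _ "axis l 1"])
  by (simp add: matrix_vector_mult_basis inner_axis' column_def)

lemma diag_part:
  fixes g w :: "real^'n"
  assumes g: "\<forall>l. g $ l \<noteq> 0" and w: "w \<in> open_simplex"
  shows "pos_def (diagW w g) \<and> lam (diagW w g) g = w"
proof -
  have wp: "\<forall>l. w $ l > 0" and ws: "(\<Sum>l\<in>UNIV. w $ l) = 1" using w by (auto simp: open_simplex_def)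
  have Wx: "diagW w g *v x = (\<chi> i. w $ i / (g $ i)^2 * x $ i)" for x
    by (simp add: vec_eq_iff diagW_def matrix_vector_mult_def ifm)
  have sym: "transpose (diagW w g) = diagW w g"
    by (simp add: vec_eq_iff diagW_def transpose_def)
  have pos: "x \<bullet> (diagW w g *v x) > 0" if xnz: "x \<noteq> 0" for x
  proof -
    obtain i where i: "x $ i \<noteq> 0" using xnz by (auto simp: vec_eq_iff)
    have "x \<bullet> (diagW w g *v x) = (\<Sum>j\<in>UNIV. w $ j / (g $ j)^2 * (x $ j)^2)"
      by (simp add: Wx inner_vec_def power2_eq_square mult.commute mult.left_commute)
    also have "\<dots> > 0"
      apply (rule sum_pos2[of UNIV i])
      using i wp g by (auto intro!: mult_nonneg_nonneg divide_nonneg_pos simp: less_imp_le)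
    finally show ?thesis .
  qed
  have Wg: "diagW w g *v g = (\<chi> i. w $ i / g $ i)"
    using g by (simp add: Wx vec_eq_iff power2_eq_square)
  have gWg: "g \<bullet> (diagW w g *v g) = 1"
    using g ws by (simp add: Wg inner_vec_def)
  have "lam (diagW w g) g = (\<chi> l. g $ l * (diagW w g *v g) $ l)" by (simp add: lam_def gWg)
  also have "\<dots> = w" using g by (simp add: Wg vec_eq_iff)
  finally have "lam (diagW w g) g = w" .
  then show ?thesis using sym pos by (auto simp: pos_def_def)
qed

lemma general_part:
  fixes g w :: "real^'n"
  assumes g: "\<forall>l. g $ l \<noteq> 0" and w: "w \<in> std_simplex"
  shows "\<exists>W. pos_def W \<and> lam W g = w"
proof -
  have wp: "\<forall>l. w $ l \<ge> 0" and ws: "(\<Sum>l\<in>UNIV. w $ l) = 1" using w by (auto simp: std_simplex_def)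
  define v where "v = (\<chi> l. w $ l / g $ l)"
  define c where "c = g \<bullet> g"
  have gnz: "g \<noteq> 0" using g by (metis zero_index)
  have c: "c > 0" unfolding c_def using gnz by simp
  define W where "W = (\<chi> i. \<chi> j. v $ i * v $ j + (if i = j then 1 else 0) - g $ i * g $ j / c)"
  have Wx: "W *v x = (v \<bullet> x) *\<^sub>R v + x - ((g \<bullet> x)/c) *\<^sub>R g" for x
    by (simp add: vec_eq_iff W_def matrix_vector_mult_def inner_vec_def algebra_simps
        sum.distrib sum_subtractf sum_distrib_left sum_divide_distrib ifm ifm2)
  have sym: "transpose W = W"
    by (simp add: vec_eq_iff W_def transpose_def mult.commute)
  have vg: "v \<bullet> g = 1"
    using g ws by (simp add: v_def inner_vec_def)
  have pos: "x \<bullet> (W *v x) > 0" if "x \<noteq> 0" for x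
  proof -
    define y where "y = x - ((g \<bullet> x)/c) *\<^sub>R g"
    have yy: "y \<bullet> y = x \<bullet> x - (g \<bullet> x)^2 / c"
      using c unfolding y_def c_def
      by (simp add: inner_diff_left inner_diff_right inner_commute power2_eq_square field_simps)
    have e: "x \<bullet> (W *v x) = (v \<bullet> x)^2 + y \<bullet> y"
      using c by (simp add: Wx yy inner_diff_right inner_add_right inner_commute power2_eq_square field_simps c_def)
    have "x \<bullet> (W *v x) \<noteq> 0"
    proof
      assume "x \<bullet> (W *v x) = 0"
      then have "(v \<bullet> x)^2 + y \<bullet> y = 0" using e by simp
      then have vx: "v \<bullet> x = 0" and "y \<bullet> y = 0"
        by (smt (verit) inner_ge_zero zero_le_power2 power_eq_0_iff)+
      then have "y = 0" by simp
      then have xe: "x = ((g \<bullet> x)/c) *\<^sub>R g" unfolding y_def by simp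
      then have "v \<bullet> x = (g \<bullet> x)/c" using vg by (metis inner_scaleR_right mult.right_neutral)
      then have "g \<bullet> x = 0" using vx c by simp
      then show False using xe that by simp
    qed
    moreover have "x \<bullet> (W *v x) \<ge> 0" using e by simp
    ultimately show ?thesis by linarith
  qed
  have Wg: "W *v g = v"
    using c by (simp add: Wx vg c_def[symmetric])
  have gv: "g \<bullet> v = 1" using vg by (simp add: inner_commute)
  have "lam W g = (\<chi> l. g $ l * v $ l)" by (simp add: lam_def Wg gv)
  also have "\<dots> = w" using g by (simp add: v_def vec_eq_iff)
  finally have "lam W g = w" .
  then show ?thesis using sym pos by (auto simp: pos_def_def)
qed

lemma gamma_pos:
  fixes M :: "'a measure" and D :: "'a \<Rightarrow> real" and Z :: "'a \<Rightarrow> real^'n"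
  assumes "prob_space M"
    and Dm: "D \<in> borel_measurable M"
    and Zm: "Z \<in> borel_measurable M"
    and D01: "\<forall>x\<in>space M. D x \<in> {0, 1}"
    and Z01: "\<forall>x\<in>space M. \<forall>l. Z x $ l \<in> {0, 1}"
    and pp: "pZ M Z l > 0"
    and pip: "piZ M D Z l > 0"
    and sp: "SigmaZ M Z $ l $ l > 0"
  shows "gammaZ M D Z $ l > 0"
proof -
  interpret prob_space M by fact
  define Zl where "Zl = (\<lambda>x. Z x $ l)"
  have Zlm: "Zl \<in> borel_measurable M" unfolding Zl_def
    using Zm borel_measurable_nth measurable_compose by blast
  define A where "A = {x\<in>space M. Z x $ l = 1}"
  define B where "B = {x\<in>space M. Z x $ l = 0}"
  have As: "A \<in> sets M" unfolding A_def using Zlm unfolding Zl_def by measurable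
  have BA: "B = space M - A" unfolding A_def B_def using Z01 by force
  define p where "p = measure M A"
  have pdef: "pZ M Z l = p" unfolding pZ_def p_def A_def ..
  have mB: "measure M B = 1 - p" unfolding BA p_def using As prob_compl by blast
  have ZlA: "\<And>x. x \<in> space M \<Longrightarrow> Zl x = indicator A x"
    unfolding Zl_def A_def indicator_def using Z01 by force
  have iZ: "integral\<^sup>L M Zl = p"
  proof -
    have "integral\<^sup>L M Zl = integral\<^sup>L M (indicator A)"
      by (rule Bochner_Integration.integral_cong) (auto simp: ZlA)
    then show ?thesis using As p_def by (simp add: Int_absorb2 sets.sets_into_space)
  qed
  have iZZ: "integral\<^sup>L M (\<lambda>x. Zl x * Zl x) = p"
  proof -
    have "integral\<^sup>L M (\<lambda>x. Zl x * Zl x) = integral\<^sup>L M Zl"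
      by (rule Bochner_Integration.integral_cong[OF refl]) (use Z01 in \<open>force simp: Zl_def\<close>)
    then show ?thesis using iZ by simp
  qed
  have Bs: "B \<in> sets M" using As BA by auto
  have intg: "integrable M (\<lambda>x. D x * indicator S x)" if "S \<in> sets M" for S
    by (rule integrable_const_bound[where B=1]) (use D01 that Dm in \<open>auto simp: indicator_def intro!: AE_I2\<close>)
  define a where "a = integral\<^sup>L M (\<lambda>x. D x * indicator A x)"
  define b where "b = integral\<^sup>L M (\<lambda>x. D x * indicator B x)"
  have iD: "integral\<^sup>L M D = a + b"
  proof -
    have "integral\<^sup>L M D = integral\<^sup>L M (\<lambda>x. D x * indicator A x + D x * indicator B x)"
      by (rule Bochner_Integration.integral_cong) (auto simp: BA indicator_def)
    also have "\<dots> = a + b" unfolding a_def b_def using intg[OF As] intg[OF Bs] by simp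
    finally show ?thesis .
  qed
  have iDZ: "integral\<^sup>L M (\<lambda>x. D x * Zl x) = a"
    unfolding a_def by (rule Bochner_Integration.integral_cong) (auto simp: ZlA)
  have "SigmaZ M Z $ l $ l = p - p * p"
    using iZ iZZ unfolding SigmaZ_def covar_def Zl_def by simp
  with sp have p1: "p < 1" by (smt (verit) mult_le_cancel_left1 pdef pp)
  have "piZ M D Z l = a / p - b / (1 - p)"
    unfolding piZ_def condE_def using mB by (simp add: a_def b_def A_def B_def p_def)
  with pip have "a / p - b / (1 - p) > 0" by simp
  moreover have "gammaZ M D Z $ l = p * (1 - p) * (a / p - b / (1 - p))"
    using iD iDZ iZ pp p1 pdef unfolding gammaZ_def covar_def Zl_def
    by (simp add: field_simps)
  ultimately show ?thesis using pp p1 pdef by simp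
qed

theorem lemma2:
  fixes M :: "'a measure" and D :: "'a \<Rightarrow> real" and Z :: "'a \<Rightarrow> real^'n"
  assumes "prob_space M"
    and "CARD('n) \<ge> 2"
    and "D \<in> borel_measurable M"
    and "Z \<in> borel_measurable M"
    and "\<forall>x\<in>space M. D x \<in> {0, 1}"
    and "\<forall>x\<in>space M. \<forall>l. Z x $ l \<in> {0, 1}"
    and "\<forall>l. pZ M Z l > 0"
    and "\<forall>l. piZ M D Z l > 0"
    and "pos_def (SigmaZ M Z)"
  shows "(\<forall>w \<in> open_simplex.
            pos_def (diagW w (gammaZ M D Z)) \<and> lam (diagW w (gammaZ M D Z)) (gammaZ M D Z) = w)
       \<and> (\<forall>w \<in> std_simplex. \<exists>W. pos_def W \<and> lam W (gammaZ M D Z) = w)"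
proof -
  have g: "\<forall>l. gammaZ M D Z $ l \<noteq> 0"
  proof
    fix l
    have "gammaZ M D Z $ l > 0"
      using gamma_pos[OF assms(1,3,4,5,6)] assms(7,8) pd_diag[OF assms(9)] by blast
    then show "gammaZ M D Z $ l \<noteq> 0" by simp
  qed
  show ?thesis using diag_part[OF g] general_part[OF g] by blast
qed

end
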